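(* Let $h$ be a real analytic function with $h(r)>0$ for $r>0$ and $h^2(r)=r^2\varphi(r)$ with $\varphi$ real analytic and $\varphi(0)=1$. There are no solutions $v$ of $\ddot v=\frac{2}{h^2}(e^v-1)$ on $[0,\infty)$ with $v(0)=\dot v(0)=0$ and $\lim_{r\to\infty}r^{-k}e^{v(r)}=0$ for some $k\in\mathbb{Z}$, such that $\ddot v(0)=b>0$.
   Context: Dots denote derivatives with respect to $r$. *)

theory Defs
  imports "HOL-Analysis.Analysis"
begin

definition real_analytic_on :: "(real \<Rightarrow> real) \<Rightarrow> real set \<Rightarrow> bool" where
  "real_analytic_on f S \<longleftrightarrow>
     (\<forall>x\<in>S. \<exists>e>0. \<exists>a::nat \<Rightarrow> real.
        \<forall>y. \<bar>y - x\<bar> < e \<longrightarrow> (\<lambda>n. a n * (y - x) ^ n) sums f y)"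

end

theory Submission
  imports Defs "HOL-Real_Asymp.Real_Asymp"
begin

lemma growth_lim: "c>0 \<Longrightarrow> C > 0 \<Longrightarrow> filterlim (\<lambda>r::real. C * r powr (-real_of_int k) * exp (c*r)) at_top at_top"
  by real_asymp

theorem mainTheorem14:
  fixes h \<phi> :: "real \<Rightarrow> real"
  assumes h_an: "real_analytic_on h {0..}"
    and h_pos: "\<And>r. r > 0 \<Longrightarrow> h r > 0"
    and phi_an: "real_analytic_on \<phi> {0..}"
    and h_sq: "\<And>r. r \<ge> 0 \<Longrightarrow> (h r)\<^sup>2 = r\<^sup>2 * \<phi> r"
    and phi0: "\<phi> 0 = 1"
  shows "\<not> (\<exists>(v::real \<Rightarrow> real) v' v'' (b::real).
      (\<forall>r\<ge>0. (v has_real_derivative v' r) (at r within {0..})) \<and>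
      (\<forall>r\<ge>0. (v' has_real_derivative v'' r) (at r within {0..})) \<and>
      (\<forall>r>0. v'' r = 2 / (h r)\<^sup>2 * (exp (v r) - 1)) \<and>
      v 0 = 0 \<and> v' 0 = 0 \<and>
      (\<exists>k::int. ((\<lambda>r. r powi (- k) * exp (v r)) \<longlongrightarrow> 0) at_top) \<and>
      v'' 0 = b \<and> b > 0)"
proof
  assume "\<exists>(v::real \<Rightarrow> real) v' v'' (b::real).
      (\<forall>r\<ge>0. (v has_real_derivative v' r) (at r within {0..})) \<and>
      (\<forall>r\<ge>0. (v' has_real_derivative v'' r) (at r within {0..})) \<and>
      (\<forall>r>0. v'' r = 2 / (h r)\<^sup>2 * (exp (v r) - 1)) \<and>
      v 0 = 0 \<and> v' 0 = 0 \<and>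
      (\<exists>k::int. ((\<lambda>r. r powi (- k) * exp (v r)) \<longlongrightarrow> 0) at_top) \<and>
      v'' 0 = b \<and> b > 0"
  then obtain v v' v'' b k where
    D1: "\<forall>r\<ge>0. (v has_real_derivative v' r) (at r within {0..})" and
    D2: "\<forall>r\<ge>0. (v' has_real_derivative v'' r) (at r within {0..})" and
    ode: "\<forall>r>0. v'' r = 2 / (h r)\<^sup>2 * (exp (v r) - 1)" and
    v0: "v 0 = 0" and v'0: "v' 0 = 0" and
    lim: "((\<lambda>r. r powi (- k) * exp (v r)) \<longlongrightarrow> 0) at_top" and
    b: "v'' 0 = b" "b > 0"
    by blast
  have intr: "interior {0::real..} = {0<..}" by simp
  have d1: "(v has_real_derivative v' r) (at r)" if "r > 0" for r
  proof -
    have "at r within {0..} = at r"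
      by (rule at_within_interior) (use that intr in auto)
    with D1 that show ?thesis by (metis less_imp_le)
  qed
  have d2: "(v' has_real_derivative v'' r) (at r)" if "r > 0" for r
  proof -
    have "at r within {0..} = at r"
      by (rule at_within_interior) (use that intr in auto)
    with D2 that show ?thesis by (metis less_imp_le)
  qed
  have cv: "continuous_on {0..} v"
    using D1 by (metis DERIV_continuous atLeast_iff continuous_on_eq_continuous_within)
  have cv': "continuous_on {0..} v'"
    using D2 by (metis DERIV_continuous atLeast_iff continuous_on_eq_continuous_within)
  have vpp_pos: "v'' r > 0" if "r > 0" "v r > 0" for r
  proof -
    have "h r > 0" using h_pos that by auto
    then have "(h r)\<^sup>2 > 0" by simp
    moreover have "exp (v r) - 1 > 0" using that by simp
    ultimately show ?thesis using ode that by simp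
  qed
  have mvt1: "\<exists>z. a < z \<and> z < c \<and> v c - v a = (c - a) * v' z" if ac: "0 \<le> a" "a < c" for a c
  proof -
    have "continuous_on {a..c} v" by (rule continuous_on_subset[OF cv]) (use that in auto)
    moreover have "\<forall>x. a < x \<and> x < c \<longrightarrow> v differentiable (at x)"
      using d1 that by (meson le_less_trans real_differentiable_def)
    ultimately obtain l z where "a < z" "z < c" "DERIV v z :> l" "v c - v a = (c - a) * l"
      using MVT[OF ac(2)] by blast
    moreover have "DERIV v z :> v' z" using d1 \<open>a < z\<close> ac by auto
    ultimately show ?thesis using DERIV_unique by blast
  qed
  have mvt2: "\<exists>z. a < z \<and> z < c \<and> v' c - v' a = (c - a) * v'' z" if ac: "0 \<le> a" "a < c" for a c
  proof -
    have "continuous_on {a..c} v'" by (rule continuous_on_subset[OF cv']) (use that in auto)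
    moreover have "\<forall>x. a < x \<and> x < c \<longrightarrow> v' differentiable (at x)"
      using d2 that by (meson le_less_trans real_differentiable_def)
    ultimately obtain l z where "a < z" "z < c" "DERIV v' z :> l" "v' c - v' a = (c - a) * l"
      using MVT[OF ac(2)] by blast
    moreover have "DERIV v' z :> v'' z" using d2 \<open>a < z\<close> ac by auto
    ultimately show ?thesis using DERIV_unique by blast
  qed
  obtain d where d: "d > 0" "\<And>r. 0 < r \<Longrightarrow> r < d \<Longrightarrow> v' r > 0"
  proof -
    have "((\<lambda>y. (v' y - v' 0) / (y - 0)) \<longlongrightarrow> v'' 0) (at 0 within {0..})"
      using D2 has_field_derivative_iff by blast
    then have "\<forall>\<^sub>F y in at 0 within {0..}. 0 < (v' y - v' 0) / (y - 0)"
      using b by (intro order_tendstoD(1)) auto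
    then obtain d where "d > 0" "\<forall>y\<in>{0..}. y \<noteq> 0 \<and> dist y 0 < d \<longrightarrow> 0 < (v' y - v' 0) / (y - 0)"
      unfolding eventually_at by blast
    then show ?thesis using v'0
      by (intro that[of d]) (auto simp: dist_real_def zero_less_divide_iff)
  qed
  have vp_pos: "v' r > 0" if "r > 0" for r
  proof (rule ccontr)
    assume "\<not> v' r > 0"
    then have vr: "v' r \<le> 0" by simp
    with d that have rd: "r \<ge> d" by force
    define S where "S = {d/2..r} \<inter> v' -` {..0}"
    have "closed S" unfolding S_def
      using d by (intro continuous_closed_preimage continuous_on_subset[OF cv']) auto
    moreover have "bounded S" unfolding S_def by (rule bounded_subset[of "{d/2..r}"]) auto
    ultimately have "compact S" by (simp add: compact_eq_bounded_closed)
    moreover have "S \<noteq> {}"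
    proof -
      have "r \<in> S" using rd vr d unfolding S_def by auto
      then show ?thesis by blast
    qed
    ultimately obtain t where tS: "t \<in> S" and tmin: "\<And>y. y \<in> S \<Longrightarrow> t \<le> y"
      using compact_attains_inf by metis
    have t: "t \<ge> d/2" "v' t \<le> 0" "t \<le> r" using tS unfolding S_def by auto
    have tpos: "t > 0" using t d by linarith
    have below: "v' x > 0" if "0 < x" "x < t" for x
    proof (rule ccontr)
      assume "\<not> v' x > 0"
      then have "x \<ge> d" using d that by force
      then have "x \<in> S" using \<open>\<not> v' x > 0\<close> that t d unfolding S_def by auto
      then show False using tmin that by force
    qed
    have vpos: "v x > 0" if xt: "0 < x" "x \<le> t" for x
    proof -
      obtain z where "0 < z" "z < x" "v x - v 0 = (x - 0) * v' z" using mvt1[of 0 x] xt by auto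
      moreover have "v' z > 0" using below \<open>0 < z\<close> \<open>z < x\<close> xt by auto
      ultimately show ?thesis using v0 xt by simp
    qed
    obtain z where "0 < z" "z < t" "v' t - v' 0 = (t - 0) * v'' z" using mvt2[of 0 t] tpos by auto
    moreover have "v'' z > 0" using vpp_pos vpos \<open>0 < z\<close> \<open>z < t\<close> by auto
    ultimately have "v' t > 0" using v'0 tpos by simp
    then show False using t by simp
  qed
  have vpos: "v x > 0" if xt: "0 < x" for x
  proof -
    obtain z where "0 < z" "z < x" "v x - v 0 = (x - 0) * v' z" using mvt1[of 0 x] xt by auto
    moreover have "v' z > 0" using vp_pos \<open>0 < z\<close> by auto
    ultimately show ?thesis using v0 xt by simp
  qed
  define c where "c = v' 1"
  have c: "c > 0" unfolding c_def using vp_pos by simp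
  have lower: "v r \<ge> v 1 + (r - 1) * c" if r1: "r > 1" for r
  proof -
    obtain z where z: "1 < z" "z < r" "v r - v 1 = (r - 1) * v' z" using mvt1[of 1 r] r1 by auto
    obtain w where w: "1 < w" "w < z" "v' z - v' 1 = (z - 1) * v'' w" using mvt2[of 1 z] z by auto
    have "v'' w > 0" using vpp_pos vpos w by auto
    moreover have "z - 1 > 0" using w by simp
    ultimately have "(z - 1) * v'' w > 0" by simp
    then have "v' z \<ge> c" using w unfolding c_def by linarith
    then have "(r - 1) * v' z \<ge> (r - 1) * c" using r1 by (intro mult_left_mono) auto
    then show ?thesis using z by linarith
  qed
  define C where "C = exp (v 1 - c)"
  have Cpos: "C > 0" unfolding C_def by simp
  have ev1: "\<forall>\<^sub>F r in at_top. C * r powr (-real_of_int k) * exp (c*r) \<ge> 1"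
    using growth_lim[OF c Cpos, of k] by (simp add: filterlim_at_top)
  have ev2: "\<forall>\<^sub>F r in at_top. r powi (- k) * exp (v r) < 1/2"
    using order_tendstoD(2)[OF lim, of "1/2"] by simp
  have ev3: "\<forall>\<^sub>F r::real in at_top. r > 1" by (rule eventually_gt_at_top)
  obtain r where r1: "C * r powr (-real_of_int k) * exp (c*r) \<ge> 1"
      and r2: "r powi (- k) * exp (v r) < 1/2" and r3: "r > 1"
    using eventually_happens[OF eventually_conj[OF ev1 eventually_conj[OF ev2 ev3]]] by auto
  have "r powi (-k) = r powr (-real_of_int k)"
    using r3 powr_real_of_int'[of r "-k"] by simp
  have "C * exp (c*r) = exp (v 1 + (r - 1) * c)"
    unfolding C_def by (simp add: exp_add[symmetric] algebra_simps)
  also have "\<dots> \<le> exp (v r)" using lower r3 by simp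
  finally have le: "C * exp (c*r) \<le> exp (v r)" .
  have "C * exp (c*r) * r powr (-real_of_int k) \<le> exp (v r) * r powr (-real_of_int k)"
    by (rule mult_right_mono[OF le]) simp
  then have "C * r powr (-real_of_int k) * exp (c*r) \<le> r powi (-k) * exp (v r)"
    using \<open>r powi (-k) = _\<close> by (simp add: mult.commute mult.left_commute)
  then show False using r1 r2 by simp
qed

end
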